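(* Let $\bm x \in \Delta_n \setminus \{\bm e_1,\dots,\bm e_n,\tfrac1n\bm e\}$ and $p \geqslant 2$. Let $S_p = \sum_{i=1}^n x_i^p$ and $w_i = x_i^p/S_p$ for $i=1,\dots,n$, and $\bm w = (w_1,\dots,w_n)$. Then the Shannon entropy $H(\bm w) = -\sum_{i=1}^n w_i \ln w_i$ satisfies $$0 \leqslant H(\bm w) \leqslant -\frac{p}{p-1}\ln \|\bm x\|_p.$$
   Context: $\|\bm x\|_p = (\sum_{i=1}^n x_i^p)^{1/p}$; $\Delta_n = \{\bm x \in \mathbb{R}^n_{\geqslant 0} : \sum_{i=1}^n x_i = 1\}$; $\bm e_i$ is the $i$-th standard unit vector and $\bm e$ the all-ones vector in $\mathbb{R}^n$. The convention $0\ln 0 = 0$ is used. *)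

theory Defs
  imports "HOL-Analysis.Analysis"
begin

definition prob_simplex :: "(real ^ 'n::finite) set" where
  "prob_simplex = {x. (\<forall>i. 0 \<le> x $ i) \<and> (\<Sum>i\<in>UNIV. x $ i) = 1}"

definition pnorm :: "real \<Rightarrow> real ^ 'n::finite \<Rightarrow> real" where
  "pnorm p x = (\<Sum>i\<in>UNIV. \<bar>x $ i\<bar> powr p) powr (1 / p)"

definition shannon_entropy :: "real ^ 'n::finite \<Rightarrow> real" where
  "shannon_entropy w = - (\<Sum>i\<in>UNIV. (if w $ i = 0 then 0 else w $ i * ln (w $ i)))"

end

theory Submission
  imports Defs
begin

lemma pointwise:
  fixes a S p :: real
  assumes a: "a \<ge> 0" and S: "S > 0" and p: "p > 1"
  shows "(if a powr p / S = 0 then 0 else (a powr p / S) * ln (a powr p / S)) * (p - 1)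
           - (a powr p / S) * ln S \<ge> p * (a powr p / S - a)"
proof (cases "a = 0")
  case True then show ?thesis using p by simp
next
  case False
  hence a0: "a > 0" using a by simp
  define w where "w = a powr p / S"
  have w0: "w > 0" using a0 S by (simp add: w_def)
  have lnw: "ln w = p * ln a - ln S" using a0 S by (simp add: w_def ln_div ln_powr)
  have "ln (a / w) \<le> a / w - 1" using a0 w0 by (intro ln_le_minus_one) simp
  hence "w * ln (a / w) \<le> w * (a / w - 1)" using w0 by (simp add: mult_left_mono)
  hence key: "w * (ln a - ln w) \<le> a - w" using w0 a0 by (simp add: ln_div right_diff_distrib)
  have "(if w = 0 then 0 else w * ln w) * (p - 1) - w * ln S
        = p * (w * ln w) - w * (ln w + ln S)" using w0 by (simp add: algebra_simps)
  also have "\<dots> = p * (w * ln w) - p * (w * ln a)" using lnw by (simp add: algebra_simps)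
  also have "\<dots> = p * (w * (ln w - ln a))" by (simp add: algebra_simps)
  also have "w - a \<le> w * (ln w - ln a)" using key by (simp add: algebra_simps)
  hence "p * (w - a) \<le> p * (w * (ln w - ln a))" using p by (intro mult_left_mono) auto
  hence "\<dots> \<ge> p * (w - a)" .
  finally show ?thesis unfolding w_def .
qed

theorem lemma2:
  fixes x :: "real ^ 'n::finite" and p :: real
  assumes "x \<in> prob_simplex"
    and "\<forall>i. x \<noteq> axis i 1"
    and "x \<noteq> (\<chi> i. 1 / real CARD('n))"
    and "p \<ge> 2"
  defines "S \<equiv> (\<Sum>i\<in>UNIV. x $ i powr p)"
  defines "w \<equiv> (\<chi> i. x $ i powr p / S)"
  shows "0 \<le> shannon_entropy w \<and> shannon_entropy w \<le> - (p / (p - 1)) * ln (pnorm p x)"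
proof -
  have nn: "\<And>i. x $ i \<ge> 0" and s1: "(\<Sum>i\<in>UNIV. x $ i) = 1"
    using assms(1) by (auto simp: prob_simplex_def)
  have p1: "p > 1" using assms(4) by simp
  obtain j where j: "x $ j > 0"
  proof (rule ccontr)
    assume "\<not> thesis"
    hence "\<forall>i. x $ i \<le> 0" using that by (meson not_le)
    hence "\<forall>i. x $ i = 0" using nn by (meson order_antisym)
    thus False using s1 by simp
  qed
  have Sge: "S \<ge> x $ j powr p" unfolding S_def
    by (rule member_le_sum) (auto simp: nn)
  have Spos: "S > 0" using Sge j by (smt (verit) powr_gt_zero)
  have wsum: "(\<Sum>i\<in>UNIV. w $ i) = 1" unfolding w_def using Spos
    by (simp add: sum_divide_distrib[symmetric] S_def)
  have wle: "\<And>i. w $ i \<le> 1" "\<And>i. w $ i \<ge> 0" unfolding w_def using Spos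
    by (auto simp: S_def nn intro!: member_le_sum)
  define t where "t i = (if w $ i = 0 then 0 else w $ i * ln (w $ i))" for i
  have H: "shannon_entropy w = - (\<Sum>i\<in>UNIV. t i)" by (simp add: shannon_entropy_def t_def)
  have tle: "t i \<le> 0" for i
  proof (cases "w $ i = 0")
    case False
    hence "w $ i > 0" using wle(2)[of i] by simp
    hence "ln (w $ i) \<le> 0" using wle(1)[of i] by simp
    thus ?thesis using wle(2)[of i] by (simp add: t_def mult_nonneg_nonpos)
  qed (simp add: t_def)
  have pw: "t i * (p - 1) - w $ i * ln S \<ge> p * (w $ i - x $ i)" for i
  proof -
    have "w $ i = x $ i powr p / S" by (simp add: w_def)
    thus ?thesis using pointwise[OF nn[of i] Spos p1] unfolding t_def by (simp only:)
  qed
  have "(\<Sum>i\<in>UNIV. p * (w $ i - x $ i)) \<le> (\<Sum>i\<in>UNIV. t i * (p - 1) - w $ i * ln S)"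
    by (rule sum_mono) (rule pw)
  hence "0 \<le> (\<Sum>i\<in>UNIV. t i) * (p - 1) - ln S"
    by (simp add: sum_subtractf sum_distrib_left[symmetric] sum_distrib_right[symmetric]
        wsum s1)
  hence T: "(\<Sum>i\<in>UNIV. t i) \<ge> ln S / (p - 1)" using p1 by (simp add: field_simps)
  have pn: "pnorm p x = S powr (1 / p)" unfolding pnorm_def S_def using nn by simp
  have E: "- (p / (p - 1)) * ln (pnorm p x) = - (ln S / (p - 1))"
    using Spos p1 by (simp add: pn ln_powr field_simps)
  moreover have "0 \<le> - (\<Sum>i\<in>UNIV. t i)" using tle by (simp add: sum_nonpos)
  ultimately show ?thesis unfolding E H using T by linarith
qed

end
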